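(* Let $\{A_n\}_{n\ge 0}$ be determined by $A_0=A_1=1$ and $(n+1)A_{n+1}=2(n+1)A_n+3(n-1)A_{n-1}$ for $n\ge 1$ (the numbers of directed animals of size $n$). Then $\{A_n\}_{n\ge 0}$ is log-convex.
   Context: A sequence $a_0,a_1,\ldots$ of nonnegative real numbers is log-convex if $a_{k-1}a_{k+1}\ge a_k^2$ for all $k\ge 1$. *)

theory Defs
  imports Complex_Main
begin

text \<open>Directed animals: A 0 = A 1 = 1 and (n+1) A(n+1) = 2(n+1) A n + 3(n-1) A(n-1) for n \<ge> 1.
  Here written with index n+1 replaced by Suc (Suc m), i.e. n = m+1.\<close>
fun dir_animals :: "nat \<Rightarrow> real" where
  "dir_animals 0 = 1"
| "dir_animals (Suc 0) = 1"
| "dir_animals (Suc (Suc m)) =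
     (2 * (real m + 2) * dir_animals (Suc m) + 3 * real m * dir_animals m) / (real m + 2)"

definition log_convex :: "(nat \<Rightarrow> real) \<Rightarrow> bool" where
  "log_convex a \<longleftrightarrow> (\<forall>k. a k \<ge> 0) \<and> (\<forall>k\<ge>1. a (k - 1) * a (k + 1) \<ge> (a k)^2)"

lemma dir_animals_rec:
  assumes "n \<ge> 1"
  shows "real (n + 1) * dir_animals (n + 1) = 2 * real (n + 1) * dir_animals n + 3 * (real n - 1) * dir_animals (n - 1)"
proof -
  obtain m where n: "n = Suc m" using assms by (cases n) auto
  have "real m + 2 > 0" by simp
  then show ?thesis unfolding n
    by (simp add: field_simps of_nat_Suc)
qed

end

theory Submission
  imports Defs
begin

lemma da_rec3: "dir_animals (Suc (Suc (Suc m))) =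
   (2 * (real m + 3) * dir_animals (Suc (Suc m)) + 3 * (real m + 1) * dir_animals (Suc m)) / (real m + 3)"
  by (simp add: of_nat_Suc add.commute add.left_commute)

lemma da_pos: "dir_animals n > 0 \<and> dir_animals (Suc n) > 0"
proof (induction n)
  case 0 then show ?case by simp
next
  case (Suc n)
  have "dir_animals (Suc (Suc n)) > 0"
    using Suc by (simp add: add_pos_nonneg)
  then show ?case using Suc by simp
qed

lemma da_ge0: "dir_animals n \<ge> 0"
  using da_pos[of n] by simp

lemma da_bounds:
  fixes m :: nat
  defines "N \<equiv> real m"
  shows "6 * (N + 1) * dir_animals (Suc m) \<le> (2 * N + 3) * dir_animals (Suc (Suc m))
       \<and> (2 * N + 4) * dir_animals (Suc (Suc m)) \<le> (6 * N + 9) * dir_animals (Suc m)"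
  unfolding N_def
proof (induction m)
  case 0
  have "dir_animals (Suc (Suc 0)) = 2" by simp
  then show ?case by simp
next
  case (Suc m)
  define N where "N = real m"
  define a where "a = dir_animals (Suc m)"
  define b where "b = dir_animals (Suc (Suc m))"
  define c where "c = dir_animals (Suc (Suc (Suc m)))"
  have N0: "N \<ge> 0" unfolding N_def by simp
  have a0: "a \<ge> 0" unfolding a_def by (rule da_ge0)
  have b0: "b \<ge> 0" unfolding b_def by (rule da_ge0)
  have H1: "6 * (N + 1) * a \<le> (2 * N + 3) * b" and H2: "(2 * N + 4) * b \<le> (6 * N + 9) * a"
    using Suc unfolding N_def a_def b_def by auto
  have cdef: "(N + 3) * c = 2 * (N + 3) * b + 3 * (N + 1) * a"
    unfolding c_def a_def b_def N_def da_rec3 by simp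
  have up: "(2 * N + 6) * c \<le> (6 * N + 15) * b"
  proof -
    have "(2 * N + 6) * c = 2 * ((N + 3) * c)" by (simp add: algebra_simps)
    also have "\<dots> = (4 * N + 12) * b + 6 * (N + 1) * a" using cdef by (simp add: algebra_simps)
    also have "\<dots> \<le> (6 * N + 15) * b" using H1 by (simp add: algebra_simps)
    finally show ?thesis .
  qed
  have "(2*N+5) * ((2 * N + 4) * b) \<le> (2*N+5) * ((6 * N + 9) * a)"
    using H2 N0 by (intro mult_left_mono) auto
  moreover have "(2*N+3) * (2 * (N+3) * b) \<le> (2*N+5) * ((2 * N + 4) * b)"
  proof -
    have "(2*N+3) * (2 * (N+3)) \<le> (2*N+5) * (2 * N + 4)" by (simp add: algebra_simps)
    then have "(2*N+3) * (2 * (N+3)) * b \<le> (2*N+5) * (2 * N + 4) * b"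
      using b0 by (rule mult_right_mono)
    then show ?thesis by (simp add: mult.assoc)
  qed
  ultimately have "(2*N+3) * (2 * (N+3) * b) \<le> (2*N+3) * (3 * (2*N+5) * a)"
    by (simp add: algebra_simps)
  then have K: "2 * (N+3) * b \<le> 3 * (2*N+5) * a"
    using N0 by (simp add: mult_le_cancel_left)
  have "(N+3) * (6 * (N + 2) * b) \<le> (N+3) * ((2 * N + 5) * c)"
  proof -
    have "(N+3) * ((2 * N + 5) * c) = (2*N+5) * (2 * (N + 3) * b) + (N+1) * (3 * (2*N+5) * a)"
    proof -
      have "(N+3) * ((2 * N + 5) * c) = (2*N+5) * ((N+3) * c)" by (simp add: algebra_simps)
      also have "\<dots> = (2*N+5) * (2 * (N + 3) * b + 3 * (N + 1) * a)" using cdef by simp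
      finally show ?thesis by (simp add: algebra_simps)
    qed
    moreover have "(N+1) * (2 * (N+3) * b) \<le> (N+1) * (3 * (2*N+5) * a)"
      using K N0 by (intro mult_left_mono) auto
    ultimately show ?thesis by (simp add: algebra_simps)
  qed
  then have low: "6 * (N + 2) * b \<le> (2 * N + 5) * c"
    using N0 by (simp add: mult_le_cancel_left)
  show ?case using up low unfolding N_def b_def c_def by (simp add: algebra_simps)
qed

lemma da_lc: "dir_animals (Suc m) * dir_animals (Suc (Suc (Suc m))) \<ge> (dir_animals (Suc (Suc m)))^2"
proof -
  define N where "N = real m"
  define x where "x = dir_animals (Suc m)"
  define y where "y = dir_animals (Suc (Suc m))"
  define z where "z = dir_animals (Suc (Suc (Suc m)))"
  have N0: "N \<ge> 0" unfolding N_def by simp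
  have x0: "x \<ge> 0" unfolding x_def by (rule da_ge0)
  have H2: "(2 * N + 4) * y \<le> (6 * N + 9) * x"
    using da_bounds[of m] unfolding N_def x_def y_def by auto
  have y2x: "y \<ge> 2 * x"
  proof -
    have "(N+2) * y = 2 * (N + 2) * x + 3 * N * dir_animals m"
      unfolding y_def x_def N_def by simp
    moreover have "3 * N * dir_animals m \<ge> 0" using N0 da_ge0[of m] by simp
    ultimately have "(N+2) * y \<ge> (N+2) * (2 * x)" by (simp add: algebra_simps)
    then show ?thesis using N0 by (simp add: mult_le_cancel_left)
  qed
  have zdef: "(N + 3) * z = 2 * (N + 3) * y + 3 * (N + 1) * x"
    unfolding z_def x_def y_def N_def da_rec3 by simp
  define w where "w = (2*N+4) * y"
  define v where "v = (6*N+9) * x"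
  have w0: "0 \<le> w - (4*N+8) * x"
  proof -
    have "0 \<le> (2*N+4) * (y - 2*x)" using y2x N0 by simp
    then show ?thesis unfolding w_def by (simp add: algebra_simps)
  qed
  have wv: "w \<le> v" unfolding w_def v_def using H2 .
  have "w * (w - (4*N+8) * x) \<le> v * (v - (4*N+8) * x)"
  proof -
    have "0 \<le> (4*N+8) * x" using x0 N0 by simp
    then show ?thesis using w0 wv by (intro mult_mono) auto
  qed
  also have "v * (v - (4*N+8) * x) = (6*N+9) * (2*N+1) * x^2"
    unfolding v_def by (simp add: algebra_simps power2_eq_square)
  finally have "(N+3) * (w * (w - (4*N+8) * x)) \<le> (N+3) * ((6*N+9) * (2*N+1) * x^2)"
    using N0 by (intro mult_left_mono) auto
  also have "\<dots> \<le> 3 * (N+1) * (2*N+4)^2 * x^2"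
  proof -
    have "(N+3) * ((6*N+9) * (2*N+1)) \<le> 3 * (N+1) * (2*N+4)^2"
      using N0 by (simp add: algebra_simps power2_eq_square)
    then show ?thesis using x0
      by (metis mult.assoc mult_right_mono zero_le_power2)
  qed
  finally have E: "(2*N+4)^2 * ((N+3) * y * (y - 2*x)) \<le> (2*N+4)^2 * (3 * (N+1) * x^2)"
    unfolding w_def by (simp add: algebra_simps power2_eq_square)
  have "(N+3) * y * (y - 2*x) \<le> 3 * (N+1) * x^2"
    using E N0 by (simp add: mult_le_cancel_left)
  moreover have "(N+3) * (x * z) = 2 * (N+3) * x * y + 3 * (N+1) * x^2"
  proof -
    have "(N+3) * (x * z) = x * ((N+3) * z)" by (simp add: algebra_simps)
    also have "\<dots> = x * (2 * (N + 3) * y + 3 * (N + 1) * x)" using zdef by simp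
    finally show ?thesis by (simp add: algebra_simps power2_eq_square)
  qed
  moreover have "(N+3) * y^2 = (N+3) * y * (y - 2*x) + 2 * (N+3) * x * y"
    by (simp add: algebra_simps power2_eq_square)
  ultimately have "(N+3) * y^2 \<le> (N+3) * (x * z)" by linarith
  then have "y^2 \<le> x * z" using N0 by (simp add: mult_le_cancel_left)
  then show ?thesis unfolding x_def y_def z_def .
qed

theorem corollary3p7:
  shows "log_convex dir_animals"
  unfolding log_convex_def
proof (intro conjI allI impI)
  fix k show "dir_animals k \<ge> 0" by (rule da_ge0)
next
  fix k :: nat assume "k \<ge> 1"
  then consider "k = 1" | m where "k = Suc (Suc m)"
    by (metis One_nat_def Suc_le_D not0_implies_Suc le_antisym)
  then show "dir_animals (k - 1) * dir_animals (k + 1) \<ge> (dir_animals k)^2"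
  proof cases
    case 1 then show ?thesis by simp
  next
    case (2 m)
    then show ?thesis using da_lc[of m] by simp
  qed
qed

end
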